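(* Let $\mathbb L$ be an unobstructed combinatorially indecomposable tropical Lagrangian multi-section of rank $r$ over a complete fan $\Sigma$ in $N_{\mathbb R}\cong\mathbb R^n$, with $\mathbb C^\times$-local system $\mathcal L$ on $L\setminus L^{(n-2)}$ and consistent collection of wall-crossing automorphisms $\Theta$. For any $\mathbb C^\times$-local system $\mathcal L'$ on $L\setminus L^{(n-2)}$ isomorphic to $\mathcal L$, there is a consistent collection $\Theta'$ for $(\mathbb L,\mathcal L')$ and an isomorphism of toric vector bundles $\mathcal E(\mathbb L,\mathcal L,\Theta)\cong\mathcal E(\mathbb L,\mathcal L',\Theta')$.
   Context: $N$ lattice of rank $n$, $M=\mathrm{Hom}(N,\mathbb Z)$, $\Sigma(k)$ the $k$-dimensional cones, $\sigma^\vee$ dual cones, $U(\sigma)=\mathrm{Spec}\,\mathbb C[\sigma^\vee\cap M]$, $z^m$ monomials, $X_\Sigma$ the toric variety with torus $T=(\mathbb C^\times)^n$. $\mathbb L=(L,\Sigma_L,\mu,\pi,\varphi)$ is a tropical Lagrangian multi-section: a cone complex $L$ (finite union of closed rational polyhedral cones glued along faces), weights $\mu$, a branched covering $\pi$ onto $(N_{\mathbb R},\Sigma)$ mapping cones homeomorphically onto cones with weighted fibre count $r$, and $\varphi$ continuous, integral linear on cones; $m(\sigma')\in M$ its slope on a maximal cone; $\sigma^{(1)},\dots,\sigma^{(r)}$ the lifts of $\sigma\in\Sigma(n)$ with multiplicity; $L^{(k)}$ the union of cones of dimension $\le k$. Being combinatorially indecomposable, $\mathbb L$ is $(n-1)$-separable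 and unramified outside $L^{(n-2)}$; for adjacent $\sigma_1,\sigma_2\in\Sigma(n)$ each lift $\sigma_1^{(\alpha)}$ determines a unique lift $\sigma_2^{(\beta)}$ with $\sigma_1^{(\alpha)}\cap\sigma_2^{(\beta)}$ of dimension $n-1$. A $\mathbb C^\times$-local system on $L\setminus L^{(n-2)}$ is represented by constants $g^{sf}_{\sigma_1^{(\alpha)}\sigma_2^{(\beta)}}\in\mathbb C^\times$ on such adjacent pairs. $\mathcal E_\sigma$ is the trivial rank $r$ bundle on $U(\sigma)$ with frame $1(\sigma^{(\alpha)})$ of torus weight $m(\sigma^{(\alpha)})$. $G^{sf}_{\sigma_1\sigma_2}:1(\sigma_1^{(\alpha)})\mapsto g^{sf}_{\sigma_1^{(\alpha)}\sigma_2^{(\beta)}}z^{m(\sigma_1^{(\alpha)})-m(\sigma_2^{(\beta)})}1(\sigma_2^{(\beta)})$. For $\tau=\sigma_1\cap\sigma_2\in\Sigma(n-1)$ and a cone $\omega'$ of $L$, $N_\tau(\omega')$ is the endomorphism of $\mathcal E_{\sigma_1}|_{U(\tau)}$ with $(\alpha,\beta)$-entry $n^{(\alpha\beta)}_\tau(\omega')z^{m(\sigma_1^{(\alpha)})-m(\sigma_1^{(\beta)})}$ ($n$'s arbitrary complex constants) if $\omega'\subset\sigma_1^{(\alpha)}\cap\sigma_1^{(\beta)}$, $\alpha\ne\beta$, $m(\sigma_1^{(\alpha)})-m(\sigma_1^{(\beta)})\in\tau^\vee\cap M$, and $0$ otherwise; $S'_\tau=\{\sigma_1^{(\alpha)}\cap\sigma_1^{(\beta)}:m(\sigma_1^{(\alpha)})-m(\sigma_1^{(\beta)})\in\tau^\vee\cap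 M\}$; $\Theta_{\sigma_1\sigma_2}=\Theta_\tau=\prod_{\omega'\in S'_\tau}\exp N_\tau(\omega')$; $\Theta$ the collection of these; $G_{\sigma_1\sigma_2}=G^{sf}_{\sigma_1\sigma_2}\circ\Theta_{\sigma_1\sigma_2}$ on $U(\tau)$ (with $G_{\sigma_2\sigma_1}=G_{\sigma_1\sigma_2}^{-1}$). $\Theta$ is consistent if for every $\omega\in\Sigma$ and every cycle $\sigma_1,\dots,\sigma_{l+1}=\sigma_1$ of maximal cones containing $\omega$ with consecutive ones sharing an $(n-1)$-dimensional cone, $G_{\sigma_l\sigma_{l+1}}|_{U(\omega)}\circ\cdots\circ G_{\sigma_1\sigma_2}|_{U(\omega)}=\mathrm{Id}$. $\mathbb L$ is unobstructed if some $\mathcal L$ and consistent $\Theta$ exist. Then for arbitrary $\sigma_1,\sigma_2\in\Sigma(n)$, $G_{\sigma_1\sigma_2}$ on $U(\sigma_1\cap\sigma_2)$ is the composition of the $G$'s along any chain of maximal cones containing $\sigma_1\cap\sigma_2$ from $\sigma_1$ to $\sigma_2$ with consecutive ones sharing an $(n-1)$-cone; these form a cocycle, and $\mathcal E(\mathbb L,\mathcal L,\Theta)$ is the resulting toric vector bundle on $X_\Sigma$. *)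

theory Defs
  imports "HOL-Analysis.Analysis"
begin

text \<open>N = int^'n, M = Hom(N,Z) = int^'n (via the standard pairing), N_R = real^'n.\<close>

definition rvec :: "int^'n \<Rightarrow> real^'n" where
  "rvec v = (\<chi> i. of_int (v$i))"

definition pairing :: "int^'n \<Rightarrow> real^'n \<Rightarrow> real" where
  "pairing m x = (\<Sum>i\<in>UNIV. of_int (m$i) * x$i)"

definition cone_gen :: "(int^'n) set \<Rightarrow> (real^'n) set" where
  "cone_gen V = {x. \<exists>a. (\<forall>v\<in>V. a v \<ge> 0) \<and> x = (\<Sum>v\<in>V. a v *\<^sub>R rvec v)}"

definition rat_poly_cone :: "(real^'n) set \<Rightarrow> bool" where
  "rat_poly_cone \<sigma> \<longleftrightarrow> (\<exists>V. finite V \<and> \<sigma> = cone_gen V)"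

definition strongly_convex :: "(real^'n) set \<Rightarrow> bool" where
  "strongly_convex \<sigma> \<longleftrightarrow> \<sigma> \<inter> uminus ` \<sigma> = {0}"

definition fan :: "(real^'n) set set \<Rightarrow> bool" where
  "fan \<Sigma> \<longleftrightarrow> finite \<Sigma> \<and> \<Sigma> \<noteq> {} \<and>
     (\<forall>\<sigma>\<in>\<Sigma>. rat_poly_cone \<sigma> \<and> strongly_convex \<sigma>) \<and>
     (\<forall>\<sigma>\<in>\<Sigma>. \<forall>F. F face_of \<sigma> \<and> F \<noteq> {} \<longrightarrow> F \<in> \<Sigma>) \<and>
     (\<forall>\<sigma>\<in>\<Sigma>. \<forall>\<tau>\<in>\<Sigma>. (\<sigma> \<inter> \<tau>) face_of \<sigma> \<and> (\<sigma> \<inter> \<tau>) face_of \<tau>)"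

definition complete_fan :: "(real^'n) set set \<Rightarrow> bool" where
  "complete_fan \<Sigma> \<longleftrightarrow> fan \<Sigma> \<and> \<Union>\<Sigma> = UNIV"

definition cones_dim :: "(real^'n) set set \<Rightarrow> int \<Rightarrow> (real^'n) set set" where
  "cones_dim \<Sigma> k = {\<sigma>\<in>\<Sigma>. aff_dim \<sigma> = k}"

definition adjacent :: "(real^'n) set set \<Rightarrow> (real^'n) set \<Rightarrow> (real^'n) set \<Rightarrow> bool" where
  "adjacent \<Sigma> \<sigma>1 \<sigma>2 \<longleftrightarrow> \<sigma>1 \<in> cones_dim \<Sigma> (int CARD('n)) \<and> \<sigma>2 \<in> cones_dim \<Sigma> (int CARD('n))
      \<and> aff_dim (\<sigma>1 \<inter> \<sigma>2) = int CARD('n) - 1"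

definition dualM :: "(real^'n) set \<Rightarrow> (int^'n) set" where
  "dualM \<sigma> = {m. \<forall>x\<in>\<sigma>. pairing m x \<ge> 0}"

definition torus :: "(complex^'n) set" where
  "torus = {t. \<forall>i. t$i \<noteq> 0}"

definition zmon :: "int^'n \<Rightarrow> complex^'n \<Rightarrow> complex" where
  "zmon m t = (\<Prod>i\<in>UNIV. (t$i) powi (m$i))"

text \<open>A function on T that extends to a regular function on U(\<sigma>), i.e. lies in C[\<sigma>^\<or> \<inter> M].\<close>
definition regular_on :: "(real^'n) set \<Rightarrow> (complex^'n \<Rightarrow> complex) \<Rightarrow> bool" where
  "regular_on \<sigma> f \<longleftrightarrow> (\<exists>F c. finite F \<and> F \<subseteq> dualM \<sigma> \<and>
       (\<forall>t\<in>torus. f t = (\<Sum>m\<in>F. c m * zmon m t)))"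

text \<open>Points of L have type 'p; cones of L are subsets of points. lift \<sigma> \<alpha> (\<alpha> :: 'r, r = CARD('r))
  enumerates the lifts of \<sigma> with multiplicity; adjl \<sigma>1 \<sigma>2 \<alpha> is the index \<beta> determined by \<alpha>.\<close>
record ('p, 'n, 'r) tlms =
  Lcones :: "'p set set"
  proj :: "'p \<Rightarrow> real^'n"
  mult :: "'p set \<Rightarrow> nat"
  phi :: "'p \<Rightarrow> real"
  lift :: "(real^'n) set \<Rightarrow> 'r \<Rightarrow> 'p set"
  adjl :: "(real^'n) set \<Rightarrow> (real^'n) set \<Rightarrow> 'r \<Rightarrow> 'r"

definition dimL :: "('p, 'n::finite, 'r) tlms \<Rightarrow> 'p set \<Rightarrow> int" where
  "dimL L A = aff_dim (proj L ` A)"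

definition maxcones :: "('p, 'n::finite, 'r) tlms \<Rightarrow> 'p set set" where
  "maxcones L = {A\<in>Lcones L. dimL L A = int CARD('n)}"

definition slope :: "('p, 'n::finite, 'r) tlms \<Rightarrow> 'p set \<Rightarrow> int^'n" where
  "slope L A = (SOME m. \<forall>x\<in>A. phi L x = pairing m (proj L x))"

definition tropical_lagrangian_multisection ::
  "(real^'n::finite) set set \<Rightarrow> ('p, 'n, 'r::finite) tlms \<Rightarrow> bool" where
  "tropical_lagrangian_multisection \<Sigma> L \<longleftrightarrow>
     complete_fan \<Sigma> \<and> finite (Lcones L) \<and>
     (\<forall>A\<in>Lcones L. inj_on (proj L) A \<and> proj L ` A \<in> \<Sigma>) \<and>
     (\<forall>A\<in>Lcones L. \<forall>F. F face_of (proj L ` A) \<and> F \<noteq> {} \<longrightarrow> A \<inter> proj L -` F \<in> Lcones L) \<and>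
     (\<forall>A\<in>Lcones L. \<forall>B\<in>Lcones L. A \<inter> B = {} \<or>
         (A \<inter> B \<in> Lcones L \<and> proj L ` (A \<inter> B) face_of proj L ` A)) \<and>
     (\<forall>A\<in>maxcones L. mult L A \<ge> 1) \<and>
     (\<forall>\<sigma>\<in>cones_dim \<Sigma> (int CARD('n)).
         (\<Sum>A\<in>{A\<in>maxcones L. proj L ` A = \<sigma>}. mult L A) = CARD('r)) \<and>
     (\<forall>A\<in>Lcones L. \<exists>m. \<forall>x\<in>A. phi L x = pairing m (proj L x)) \<and>
     (\<forall>\<sigma>\<in>cones_dim \<Sigma> (int CARD('n)). \<forall>\<alpha>.
         lift L \<sigma> \<alpha> \<in> maxcones L \<and> proj L ` lift L \<sigma> \<alpha> = \<sigma>) \<and>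
     (\<forall>\<sigma>\<in>cones_dim \<Sigma> (int CARD('n)). \<forall>A\<in>maxcones L.
         proj L ` A = \<sigma> \<longrightarrow> card {\<alpha>. lift L \<sigma> \<alpha> = A} = mult L A)"

definition adjL :: "(real^'n::finite) set set \<Rightarrow> ('p, 'n, 'r) tlms \<Rightarrow> 'p set \<Rightarrow> 'p set \<Rightarrow> bool" where
  "adjL \<Sigma> L A B \<longleftrightarrow> A \<in> maxcones L \<and> B \<in> maxcones L \<and>
     adjacent \<Sigma> (proj L ` A) (proj L ` B) \<and> dimL L (A \<inter> B) = int CARD('n) - 1"

text \<open>Stated consequence of combinatorial indecomposability: each lift of \<sigma>1 determines a unique
  lift of an adjacent \<sigma>2 meeting it in codimension one (adjl realises this on indices).\<close>
definition unique_adjacent_lifts :: "(real^'n::finite) set set \<Rightarrow> ('p, 'n, 'r) tlms \<Rightarrow> bool" where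
  "unique_adjacent_lifts \<Sigma> L \<longleftrightarrow> (\<forall>\<sigma>1 \<sigma>2. adjacent \<Sigma> \<sigma>1 \<sigma>2 \<longrightarrow> (\<forall>\<alpha>.
      adjL \<Sigma> L (lift L \<sigma>1 \<alpha>) (lift L \<sigma>2 (adjl L \<sigma>1 \<sigma>2 \<alpha>)) \<and>
      adjl L \<sigma>2 \<sigma>1 (adjl L \<sigma>1 \<sigma>2 \<alpha>) = \<alpha> \<and>
      (\<forall>B\<in>maxcones L. proj L ` B = \<sigma>2 \<and> adjL \<Sigma> L (lift L \<sigma>1 \<alpha>) B
           \<longrightarrow> B = lift L \<sigma>2 (adjl L \<sigma>1 \<sigma>2 \<alpha>))))"

definition loc_sys :: "(real^'n::finite) set set \<Rightarrow> ('p, 'n, 'r) tlms \<Rightarrow> ('p set \<Rightarrow> 'p set \<Rightarrow> complex) \<Rightarrow> bool" where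
  "loc_sys \<Sigma> L g \<longleftrightarrow> (\<forall>A B. adjL \<Sigma> L A B \<longrightarrow> g A B \<noteq> 0 \<and> g B A = inverse (g A B))"

definition iso_loc_sys :: "(real^'n::finite) set set \<Rightarrow> ('p, 'n, 'r) tlms \<Rightarrow>
    ('p set \<Rightarrow> 'p set \<Rightarrow> complex) \<Rightarrow> ('p set \<Rightarrow> 'p set \<Rightarrow> complex) \<Rightarrow> bool" where
  "iso_loc_sys \<Sigma> L g g' \<longleftrightarrow> (\<exists>h. (\<forall>A\<in>maxcones L. h A \<noteq> 0) \<and>
      (\<forall>A B. adjL \<Sigma> L A B \<longrightarrow> g' A B = h B * g A B / h A))"

text \<open>Convention: a bundle map is recorded at a torus point t by the matrix X with
  X $ \<alpha> $ \<beta> = coefficient of the target frame element \<beta> in the image of source frame element \<alpha>.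
  Hence "first A, then B" is the matrix A ** B.\<close>

definition Gsf :: "('p, 'n::finite, 'r::finite) tlms \<Rightarrow> ('p set \<Rightarrow> 'p set \<Rightarrow> complex) \<Rightarrow>
    (real^'n) set \<Rightarrow> (real^'n) set \<Rightarrow> complex^'n \<Rightarrow> complex^'r^'r" where
  "Gsf L g \<sigma>1 \<sigma>2 t = (\<chi> \<alpha> \<beta>. if \<beta> = adjl L \<sigma>1 \<sigma>2 \<alpha>
      then g (lift L \<sigma>1 \<alpha>) (lift L \<sigma>2 \<beta>) * zmon (slope L (lift L \<sigma>1 \<alpha>) - slope L (lift L \<sigma>2 \<beta>)) t
      else 0)"

definition Nmat :: "('p, 'n::finite, 'r::finite) tlms \<Rightarrow> (real^'n) set \<Rightarrow> (real^'n) set \<Rightarrow> 'p set \<Rightarrow>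
    ('r \<Rightarrow> 'r \<Rightarrow> complex) \<Rightarrow> complex^'n \<Rightarrow> complex^'r^'r" where
  "Nmat L \<sigma>1 \<tau> \<omega> c t = (\<chi> \<alpha> \<beta>.
      if \<alpha> \<noteq> \<beta> \<and> \<omega> \<subseteq> lift L \<sigma>1 \<alpha> \<inter> lift L \<sigma>1 \<beta> \<and>
         slope L (lift L \<sigma>1 \<alpha>) - slope L (lift L \<sigma>1 \<beta>) \<in> dualM \<tau>
      then c \<alpha> \<beta> * zmon (slope L (lift L \<sigma>1 \<alpha>) - slope L (lift L \<sigma>1 \<beta>)) t else 0)"

definition Sset :: "('p, 'n::finite, 'r::finite) tlms \<Rightarrow> (real^'n) set \<Rightarrow> (real^'n) set \<Rightarrow> 'p set set" where
  "Sset L \<sigma>1 \<tau> = {lift L \<sigma>1 \<alpha> \<inter> lift L \<sigma>1 \<beta> | \<alpha> \<beta>.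
      slope L (lift L \<sigma>1 \<alpha>) - slope L (lift L \<sigma>1 \<beta>) \<in> dualM \<tau>}"

definition matexp :: "complex^'r^'r \<Rightarrow> complex^'r^'r" where
  "matexp A = (\<Sum>k. (1 / fact k) *\<^sub>R (((\<lambda>B. A ** B) ^^ k) (mat 1)))"

definition wall_aut :: "('p, 'n::finite, 'r::finite) tlms \<Rightarrow> (real^'n) set \<Rightarrow> (real^'n) set \<Rightarrow>
    (complex^'n \<Rightarrow> complex^'r^'r) \<Rightarrow> bool" where
  "wall_aut L \<sigma>1 \<sigma>2 Th \<longleftrightarrow> (\<exists>ws c. distinct ws \<and> set ws = Sset L \<sigma>1 (\<sigma>1 \<inter> \<sigma>2) \<and>
      (\<forall>t\<in>torus. Th t = foldr (\<lambda>\<omega> X. matexp (Nmat L \<sigma>1 (\<sigma>1 \<inter> \<sigma>2) \<omega> (c \<omega>) t) ** X) ws (mat 1)))"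

definition Gmat :: "('p, 'n::finite, 'r::finite) tlms \<Rightarrow> ('p set \<Rightarrow> 'p set \<Rightarrow> complex) \<Rightarrow>
    ((real^'n) set \<Rightarrow> (real^'n) set \<Rightarrow> complex^'n \<Rightarrow> complex^'r^'r) \<Rightarrow>
    (real^'n) set \<Rightarrow> (real^'n) set \<Rightarrow> complex^'n \<Rightarrow> complex^'r^'r" where
  "Gmat L g Th \<sigma>1 \<sigma>2 t = Th \<sigma>1 \<sigma>2 t ** Gsf L g \<sigma>1 \<sigma>2 t"

definition wall_collection :: "(real^'n::finite) set set \<Rightarrow> ('p, 'n, 'r::finite) tlms \<Rightarrow>
    ('p set \<Rightarrow> 'p set \<Rightarrow> complex) \<Rightarrow>
    ((real^'n) set \<Rightarrow> (real^'n) set \<Rightarrow> complex^'n \<Rightarrow> complex^'r^'r) \<Rightarrow> bool" where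
  "wall_collection \<Sigma> L g Th \<longleftrightarrow> (\<forall>\<sigma>1 \<sigma>2. adjacent \<Sigma> \<sigma>1 \<sigma>2 \<longrightarrow>
      (wall_aut L \<sigma>1 \<sigma>2 (Th \<sigma>1 \<sigma>2) \<or> wall_aut L \<sigma>2 \<sigma>1 (Th \<sigma>2 \<sigma>1)) \<and>
      (\<forall>t\<in>torus. Gmat L g Th \<sigma>1 \<sigma>2 t ** Gmat L g Th \<sigma>2 \<sigma>1 t = mat 1))"

fun chainG :: "((real^'n) set \<Rightarrow> (real^'n) set \<Rightarrow> complex^'n \<Rightarrow> complex^'r^'r) \<Rightarrow>
    (real^'n) set list \<Rightarrow> complex^'n \<Rightarrow> complex^'r^'r" where
  "chainG G (a # b # cs) t = G a b t ** chainG G (b # cs) t"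
| "chainG G _ t = mat 1"

definition is_chain :: "(real^'n::finite) set set \<Rightarrow> (real^'n) set \<Rightarrow> (real^'n) set list \<Rightarrow> bool" where
  "is_chain \<Sigma> \<omega> cs \<longleftrightarrow> cs \<noteq> [] \<and> (\<forall>\<sigma>\<in>set cs. \<sigma> \<in> cones_dim \<Sigma> (int CARD('n)) \<and> \<omega> \<subseteq> \<sigma>) \<and>
      (\<forall>i. i + 1 < length cs \<longrightarrow> adjacent \<Sigma> (cs ! i) (cs ! (i + 1)))"

definition consistent :: "(real^'n::finite) set set \<Rightarrow> ('p, 'n, 'r::finite) tlms \<Rightarrow>
    ('p set \<Rightarrow> 'p set \<Rightarrow> complex) \<Rightarrow>
    ((real^'n) set \<Rightarrow> (real^'n) set \<Rightarrow> complex^'n \<Rightarrow> complex^'r^'r) \<Rightarrow> bool" where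
  "consistent \<Sigma> L g Th \<longleftrightarrow> wall_collection \<Sigma> L g Th \<and>
     (\<forall>\<omega>\<in>\<Sigma>. \<forall>cs. is_chain \<Sigma> \<omega> cs \<and> hd cs = last cs \<longrightarrow>
        (\<forall>t\<in>torus. chainG (Gmat L g Th) cs t = mat 1))"

definition Gfull :: "(real^'n::finite) set set \<Rightarrow> ('p, 'n, 'r::finite) tlms \<Rightarrow>
    ('p set \<Rightarrow> 'p set \<Rightarrow> complex) \<Rightarrow>
    ((real^'n) set \<Rightarrow> (real^'n) set \<Rightarrow> complex^'n \<Rightarrow> complex^'r^'r) \<Rightarrow>
    (real^'n) set \<Rightarrow> (real^'n) set \<Rightarrow> complex^'n \<Rightarrow> complex^'r^'r" where
  "Gfull \<Sigma> L g Th \<sigma>1 \<sigma>2 = chainG (Gmat L g Th)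
      (SOME cs. is_chain \<Sigma> (\<sigma>1 \<inter> \<sigma>2) cs \<and> hd cs = \<sigma>1 \<and> last cs = \<sigma>2)"

text \<open>Isomorphism of the toric vector bundles E(L,g,Th) and E(L,g',Th'): on each U(\<sigma>) a
  T-equivariant isomorphism of the trivialised bundles (entries regular on U(\<sigma>), inverse too),
  compatible with the transition functions (checked on the dense torus T).\<close>
definition toric_bundle_iso :: "(real^'n::finite) set set \<Rightarrow> ('p, 'n, 'r::finite) tlms \<Rightarrow>
    ('p set \<Rightarrow> 'p set \<Rightarrow> complex) \<Rightarrow>
    ((real^'n) set \<Rightarrow> (real^'n) set \<Rightarrow> complex^'n \<Rightarrow> complex^'r^'r) \<Rightarrow>
    ('p set \<Rightarrow> 'p set \<Rightarrow> complex) \<Rightarrow>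
    ((real^'n) set \<Rightarrow> (real^'n) set \<Rightarrow> complex^'n \<Rightarrow> complex^'r^'r) \<Rightarrow> bool" where
  "toric_bundle_iso \<Sigma> L g Th g' Th' \<longleftrightarrow> (\<exists>\<Phi> \<Psi>. \<forall>\<sigma>\<in>cones_dim \<Sigma> (int CARD('n)).
      (\<forall>\<alpha> \<beta>. regular_on \<sigma> (\<lambda>t. \<Phi> \<sigma> t $ \<alpha> $ \<beta>) \<and> regular_on \<sigma> (\<lambda>t. \<Psi> \<sigma> t $ \<alpha> $ \<beta>)) \<and>
      (\<forall>t\<in>torus. \<Phi> \<sigma> t ** \<Psi> \<sigma> t = mat 1 \<and> \<Psi> \<sigma> t ** \<Phi> \<sigma> t = mat 1) \<and>
      (\<forall>s\<in>torus. \<forall>t\<in>torus. \<forall>\<alpha> \<beta>. \<Phi> \<sigma> (s * t) $ \<alpha> $ \<beta> =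
          zmon (slope L (lift L \<sigma> \<alpha>) - slope L (lift L \<sigma> \<beta>)) s * \<Phi> \<sigma> t $ \<alpha> $ \<beta>) \<and>
      (\<forall>\<sigma>2\<in>cones_dim \<Sigma> (int CARD('n)). \<forall>t\<in>torus.
          Gfull \<Sigma> L g Th \<sigma> \<sigma>2 t ** \<Phi> \<sigma>2 t = \<Phi> \<sigma> t ** Gfull \<Sigma> L g' Th' \<sigma> \<sigma>2 t))"

end

theory Submission
  imports Defs
begin


definition dg :: "('r::finite \<Rightarrow> complex) \<Rightarrow> complex^'r^'r" where
  "dg a = (\<chi> i j. if i = j then a i else 0)"

lemma dg_mult_left: "(dg a ** X) $ i $ j = a i * X $ i $ j"
proof -
  have "(\<Sum>k\<in>UNIV. (if i = k then a i else 0) * X $ k $ j) = (\<Sum>k\<in>UNIV. if k = i then a i * X $ i $ j else 0)"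
    by (rule sum.cong) auto
  then show ?thesis by (simp add: matrix_matrix_mult_def dg_def)
qed

lemma dg_mult_right: "(X ** dg a) $ i $ j = X $ i $ j * a j"
proof -
  have "(\<Sum>k\<in>UNIV. X $ i $ k * (if k = j then a k else 0)) = (\<Sum>k\<in>UNIV. if k = j then X $ i $ j * a j else 0)"
    by (rule sum.cong) auto
  then show ?thesis by (simp add: matrix_matrix_mult_def dg_def)
qed

lemma dg_inv1: "(\<forall>i. a i \<noteq> 0) \<Longrightarrow> dg a ** dg (\<lambda>i. inverse (a i)) = mat 1"
  unfolding vec_eq_iff dg_mult_left by (simp add: dg_def mat_def)

lemma dg_inv2: "(\<forall>i. a i \<noteq> 0) \<Longrightarrow> dg (\<lambda>i. inverse (a i)) ** dg a = mat 1"
  unfolding vec_eq_iff dg_mult_left by (simp add: dg_def mat_def)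

definition cj :: "('r::finite \<Rightarrow> complex) \<Rightarrow> complex^'r^'r \<Rightarrow> complex^'r^'r" where
  "cj a X = dg (\<lambda>i. inverse (a i)) ** X ** dg a"

lemma cj_nth: "cj a X $ i $ j = inverse (a i) * X $ i $ j * a j"
  by (simp add: cj_def dg_mult_right dg_mult_left)

lemma cj_mult: "(\<forall>i. a i \<noteq> 0) \<Longrightarrow> cj a (X ** Y) = cj a X ** cj a Y"
proof -
  assume a: "\<forall>i. a i \<noteq> 0"
  have "cj a X ** cj a Y = dg (\<lambda>i. inverse (a i)) ** X ** (dg a ** dg (\<lambda>i. inverse (a i))) ** Y ** dg a"
    by (simp add: cj_def matrix_mul_assoc)
  also have "\<dots> = cj a (X ** Y)" using dg_inv1[OF a] by (simp add: cj_def matrix_mul_assoc)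
  finally show ?thesis by simp
qed

lemma cj_one: "(\<forall>i. a i \<noteq> 0) \<Longrightarrow> cj a (mat 1) = mat 1"
  by (simp add: cj_def dg_inv2)

lemma linear_cj: "linear (cj a)"
proof (rule linearI)
  fix X Y :: "complex^'a^'a"
  show "cj a (X + Y) = cj a X + cj a Y"
    unfolding vec_eq_iff by (simp add: cj_nth distrib_left distrib_right)
next
  fix c :: real and X :: "complex^'a^'a"
  show "cj a (c *\<^sub>R X) = c *\<^sub>R cj a X"
    unfolding vec_eq_iff by (simp add: cj_nth scaleR_conv_of_real)
qed
lemma bounded_linear_cj: "bounded_linear (cj a)"
  using linear_cj linear_conv_bounded_linear by blast

definition Pw :: "complex^'r^'r \<Rightarrow> nat \<Rightarrow> complex^'r^'r" where
  "Pw A k = ((\<lambda>B. A ** B) ^^ k) (mat 1)"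

lemma Pw_0: "Pw A 0 = mat 1"
  by (simp add: Pw_def)

lemma Pw_Suc: "Pw A (Suc k) = A ** Pw A k"
  by (simp add: Pw_def)

lemma Pw_cj: assumes a: "\<forall>i. a i \<noteq> 0" shows "Pw (cj a A) k = cj a (Pw A k)"
proof (induction k)
  case 0 then show ?case using a by (simp add: Pw_0 cj_one)
next
  case (Suc k)
  have "Pw (cj a A) (Suc k) = cj a A ** cj a (Pw A k)" using Suc.IH by (simp add: Pw_Suc)
  also have "\<dots> = cj a (A ** Pw A k)" by (simp add: cj_mult[OF a])
  finally show ?case by (simp add: Pw_Suc)
qed

lemma norm_vec_le_sum: "norm (x::'a::real_normed_vector^'n) \<le> (\<Sum>i\<in>UNIV. norm (x $ i))"
  unfolding norm_vec_def by (rule L2_set_le_sum) simp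

lemma norm_mm: "norm ((X::complex^'r::finite^'r) ** (Y::complex^'r^'r)) \<le> real (CARD('r))^3 * norm X * norm Y"
proof -
  have e: "norm ((X ** Y) $ i $ j) \<le> real (CARD('r)) * (norm X * norm Y)" for i j
  proof -
    have "norm ((X ** Y) $ i $ j) = norm (\<Sum>k\<in>UNIV. X $ i $ k * Y $ k $ j)"
      by (simp add: matrix_matrix_mult_def)
    also have "\<dots> \<le> (\<Sum>k\<in>UNIV. norm (X $ i $ k) * norm (Y $ k $ j))"
      by (rule order_trans[OF norm_sum]) (simp add: norm_mult)
    also have "\<dots> \<le> (\<Sum>k\<in>(UNIV::'r set). norm X * norm Y)"
    proof (rule sum_mono)
      fix k
      have "norm (X $ i $ k) \<le> norm X" using order_trans[OF Finite_Cartesian_Product.norm_nth_le Finite_Cartesian_Product.norm_nth_le] by blast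
      moreover have "norm (Y $ k $ j) \<le> norm Y" using order_trans[OF Finite_Cartesian_Product.norm_nth_le Finite_Cartesian_Product.norm_nth_le] by blast
      ultimately show "norm (X $ i $ k) * norm (Y $ k $ j) \<le> norm X * norm Y"
        by (simp add: mult_mono)
    qed
    finally show ?thesis by simp
  qed
  have r: "norm ((X ** Y) $ i) \<le> real (CARD('r)) * (real (CARD('r)) * (norm X * norm Y))" for i
  proof -
    have "norm ((X ** Y) $ i) \<le> (\<Sum>j\<in>UNIV. norm ((X ** Y) $ i $ j))" by (rule norm_vec_le_sum)
    also have "\<dots> \<le> (\<Sum>j\<in>(UNIV::'r set). real (CARD('r)) * (norm X * norm Y))"
      using e by (intro sum_mono) auto
    finally show ?thesis by simp
  qed
  have "norm (X ** Y) \<le> (\<Sum>i\<in>UNIV. norm ((X ** Y) $ i))" by (rule norm_vec_le_sum)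
  also have "\<dots> \<le> (\<Sum>i\<in>(UNIV::'r set). real (CARD('r)) * (real (CARD('r)) * (norm X * norm Y)))"
    using r by (intro sum_mono) auto
  finally show ?thesis by (simp add: power3_eq_cube mult.assoc)
qed

lemma norm_Pw: "norm (Pw (A::complex^'r::finite^'r) k) \<le> (real (CARD('r))^3 * norm A)^k * norm (mat 1 :: complex^'r^'r)"
proof (induction k)
  case 0 then show ?case by (simp add: Pw_0)
next
  case (Suc k)
  have "norm (Pw A (Suc k)) = norm (A ** Pw A k)" by (simp add: Pw_Suc)
  also have "\<dots> \<le> real (CARD('r))^3 * norm A * norm (Pw A k)" by (rule norm_mm)
  also have "\<dots> \<le> real (CARD('r))^3 * norm A * ((real (CARD('r))^3 * norm A)^k * norm (mat 1 :: complex^'r^'r))"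
    by (rule mult_left_mono[OF Suc.IH]) simp
  finally show ?case by (simp add: mult.assoc mult.left_commute)
qed

lemma summable_expser: "summable (\<lambda>k. (1 / fact k) *\<^sub>R Pw (A::complex^'r::finite^'r) k)"
proof (rule summable_comparison_test)
  let ?c = "real (CARD('r))^3 * norm A"
  show "\<exists>N. \<forall>n\<ge>N. norm ((1 / fact n) *\<^sub>R Pw A n) \<le> inverse (fact n) * ?c ^ n * norm (mat 1 :: complex^'r^'r)"
  proof (intro exI allI impI)
    fix n :: nat
    have "norm ((1 / fact n) *\<^sub>R Pw A n) = inverse (fact n) * norm (Pw A n)"
      by (simp add: divide_inverse)
    also have "\<dots> \<le> inverse (fact n) * (?c ^ n * norm (mat 1 :: complex^'r^'r))"
      by (rule mult_left_mono[OF norm_Pw]) simp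
    finally show "norm ((1 / fact n) *\<^sub>R Pw A n) \<le> inverse (fact n) * ?c ^ n * norm (mat 1 :: complex^'r^'r)"
      by (simp add: mult.assoc)
  qed
  show "summable (\<lambda>n. inverse (fact n) * ?c ^ n * norm (mat 1 :: complex^'r^'r))"
    by (rule summable_mult2) (rule summable_exp)
qed

lemma matexp_Pw: "matexp A = (\<Sum>k. (1 / fact k) *\<^sub>R Pw A k)"
  by (simp add: matexp_def Pw_def)

lemma matexp_cj: "(\<forall>i. a i \<noteq> 0) \<Longrightarrow> matexp (cj a A) = cj a (matexp A)"
proof -
  assume a: "\<forall>i. a i \<noteq> 0"
  have "cj a (matexp A) = (\<Sum>k. cj a ((1 / fact k) *\<^sub>R Pw A k))"
    unfolding matexp_Pw by (rule bounded_linear.suminf[OF bounded_linear_cj summable_expser])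
  also have "\<dots> = (\<Sum>k. (1 / fact k) *\<^sub>R Pw (cj a A) k)"
    using a by (simp add: Pw_cj linear_cmul[OF linear_cj])
  finally show ?thesis by (simp add: matexp_Pw)
qed



lemma cone_gen_sub_hull:
  assumes "finite W" "W \<subseteq> V" "\<forall>v\<in>W. a v \<ge> 0"
  shows "(\<Sum>v\<in>W. a v *\<^sub>R rvec v) \<in> convex_cone hull (rvec ` V)"
  using assms
proof (induction W rule: finite_induct)
  case empty then show ?case by (simp add: convex_cone_hull_contains_0)
next
  case (insert w W)
  have "rvec w \<in> convex_cone hull (rvec ` V)" using insert.prems by (intro hull_inc) auto
  then have "a w *\<^sub>R rvec w \<in> convex_cone hull (rvec ` V)"
    using insert.prems by (intro convex_cone_hull_mul) auto
  moreover have "(\<Sum>v\<in>W. a v *\<^sub>R rvec v) \<in> convex_cone hull (rvec ` V)"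
    using insert by auto
  ultimately show ?case using insert.hyps by (simp add: convex_cone_hull_add)
qed

lemma cone_genI: "(\<forall>v\<in>V. a v \<ge> 0) \<Longrightarrow> x = (\<Sum>v\<in>V. a v *\<^sub>R rvec v) \<Longrightarrow> x \<in> cone_gen V"
  unfolding cone_gen_def mem_Collect_eq by (rule exI[of _ a]) (rule conjI)

lemma cone_genE: "x \<in> cone_gen V \<Longrightarrow> (\<And>a. \<forall>v\<in>V. a v \<ge> 0 \<Longrightarrow> x = (\<Sum>v\<in>V. a v *\<^sub>R rvec v) \<Longrightarrow> P) \<Longrightarrow> P"
  unfolding cone_gen_def mem_Collect_eq by (elim exE conjE)

lemma cone_gen_0: "0 \<in> cone_gen V"
  by (rule cone_genI[of V "\<lambda>_. 0"]) simp_all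

lemma cone_gen_add: "x \<in> cone_gen V \<Longrightarrow> y \<in> cone_gen V \<Longrightarrow> x + y \<in> cone_gen V"
proof -
  assume "x \<in> cone_gen V" "y \<in> cone_gen V"
  obtain a where a: "\<forall>v\<in>V. a v \<ge> 0" "x = (\<Sum>v\<in>V. a v *\<^sub>R rvec v)"
    using \<open>x \<in> cone_gen V\<close> by (erule cone_genE)
  obtain b where b: "\<forall>v\<in>V. b v \<ge> 0" "y = (\<Sum>v\<in>V. b v *\<^sub>R rvec v)"
    using \<open>y \<in> cone_gen V\<close> by (erule cone_genE)
  have "x + y = (\<Sum>v\<in>V. (a v + b v) *\<^sub>R rvec v)"
    unfolding a(2) b(2) scaleR_add_left sum.distrib by (rule refl)
  moreover have "\<forall>v\<in>V. a v + b v \<ge> 0" using a(1) b(1) by auto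
  ultimately show ?thesis by (rule cone_genI[rotated])
qed

lemma cone_gen_mul: "x \<in> cone_gen V \<Longrightarrow> 0 \<le> c \<Longrightarrow> c *\<^sub>R x \<in> cone_gen V"
proof -
  assume "x \<in> cone_gen V" "0 \<le> c"
  obtain a where a: "\<forall>v\<in>V. a v \<ge> 0" "x = (\<Sum>v\<in>V. a v *\<^sub>R rvec v)"
    using \<open>x \<in> cone_gen V\<close> by (erule cone_genE)
  have "c *\<^sub>R x = (\<Sum>v\<in>V. (c * a v) *\<^sub>R rvec v)"
    unfolding a(2) scaleR_sum_right scaleR_scaleR by (rule refl)
  moreover have "\<forall>v\<in>V. c * a v \<ge> 0" using a(1) \<open>0 \<le> c\<close> by auto
  ultimately show ?thesis by (rule cone_genI[rotated])
qed

lemma convex_cone_cone_gen: "convex_cone (cone_gen V)"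
  unfolding convex_cone_iff using cone_gen_0 cone_gen_add cone_gen_mul by blast

lemma rvec_in_cone_gen: "finite V \<Longrightarrow> v \<in> V \<Longrightarrow> rvec v \<in> cone_gen V"
proof -
  assume "finite V" "v \<in> V"
  have "(\<Sum>w\<in>V. (if w = v then 1 else 0) *\<^sub>R rvec w) = (\<Sum>w\<in>V. if w = v then rvec v else 0)"
    by (rule sum.cong) auto
  then have "rvec v = (\<Sum>w\<in>V. (if w = v then 1 else 0) *\<^sub>R rvec w)"
    using \<open>finite V\<close> \<open>v \<in> V\<close> by simp
  then show ?thesis by (rule cone_genI[rotated]) simp
qed

lemma cone_gen_eq: "finite V \<Longrightarrow> cone_gen V = convex_cone hull (rvec ` V)"
proof
  assume "finite V"
  show "cone_gen V \<subseteq> convex_cone hull (rvec ` V)"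
  proof
    fix x assume "x \<in> cone_gen V"
    obtain a where a: "\<forall>v\<in>V. a v \<ge> 0" "x = (\<Sum>v\<in>V. a v *\<^sub>R rvec v)"
      using \<open>x \<in> cone_gen V\<close> by (erule cone_genE)
    show "x \<in> convex_cone hull (rvec ` V)"
      using cone_gen_sub_hull[OF \<open>finite V\<close> subset_refl a(1)] a(2) by simp
  qed
next
  assume "finite V"
  show "convex_cone hull (rvec ` V) \<subseteq> cone_gen V"
  proof (rule hull_minimal)
    show "rvec ` V \<subseteq> cone_gen V" using rvec_in_cone_gen[OF \<open>finite V\<close>] by (rule image_subsetI)
    show "convex_cone (cone_gen V)" by (rule convex_cone_cone_gen)
  qed
qed

lemma fan_props:
  assumes "fan \<Sigma>" "\<rho> \<in> \<Sigma>"
  shows "closed \<rho>" "convex \<rho>" "0 \<in> \<rho>"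
proof -
  have "\<forall>\<sigma>\<in>\<Sigma>. rat_poly_cone \<sigma> \<and> strongly_convex \<sigma>"
    using assms(1) unfolding fan_def by (elim conjE) assumption
  then have "rat_poly_cone \<rho>" using assms(2) by blast
  then obtain V where V: "finite V" "\<rho> = cone_gen V"
    unfolding rat_poly_cone_def by blast
  show "closed \<rho>" using V by (simp add: cone_gen_eq closed_convex_cone_hull)
  show "convex \<rho>" using V by (simp add: cone_gen_eq convex_convex_cone_hull)
  show "0 \<in> \<rho>" using V by (simp add: cone_gen_eq convex_cone_hull_contains_0)
qed

lemma interior_Un_closed_empty:
  assumes "finite F" "\<forall>C\<in>F. closed C \<and> interior C = {}" "closed X"
  shows "interior (X \<union> \<Union>F) = interior X"
  using assms
proof (induction F rule: finite_induct)
  case empty then show ?case by simp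
next
  case (insert C F)
  have cl: "closed (X \<union> \<Union>F)" using insert by (intro closed_Un closed_Union) auto
  have "X \<union> \<Union>(insert C F) = (X \<union> \<Union>F) \<union> C" by auto
  then have "interior (X \<union> \<Union>(insert C F)) = interior (X \<union> \<Union>F)"
    using interior_closed_Un_empty_interior[OF cl] insert.prems by simp
  then show ?case using insert by simp
qed

lemma lowdim_interior:
  fixes S :: "(real^'n) set"
  assumes "aff_dim S < int CARD('n)"
  shows "interior S = {}"
  using aff_dim_nonempty_interior[of S] assms by auto

lemma max_cover:
  fixes \<Sigma> :: "(real^'n) set set"
  assumes "complete_fan \<Sigma>"
  shows "\<Union>(cones_dim \<Sigma> (int CARD('n))) = UNIV"
proof -
  let ?M = "cones_dim \<Sigma> (int CARD('n))"
  have fan: "fan \<Sigma>" and un: "\<Union>\<Sigma> = UNIV" using assms unfolding complete_fan_def by auto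
  have fin: "finite \<Sigma>" using fan unfolding fan_def by auto
  have clM: "closed (\<Union>?M)"
    using fin fan_props[OF fan] by (intro closed_Union) (auto simp: cones_dim_def)
  have F: "\<forall>C\<in>\<Sigma> - ?M. closed C \<and> interior C = {}"
  proof
    fix C assume C: "C \<in> \<Sigma> - ?M"
    then have "aff_dim C \<noteq> int CARD('n)" by (auto simp: cones_dim_def)
    moreover have "aff_dim C \<le> int CARD('n)" using aff_dim_le_DIM[of C] by simp
    ultimately show "closed C \<and> interior C = {}"
      using C fan_props[OF fan] lowdim_interior[of C] by auto
  qed
  have "\<Union>?M \<union> \<Union>(\<Sigma> - ?M) = UNIV" using un by (auto simp: cones_dim_def)
  then have "interior (\<Union>?M) = UNIV"
    using interior_Un_closed_empty[OF _ F clM] fin by simp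
  then show ?thesis using interior_subset[of "\<Union>?M"] by auto
qed

lemma rtranclp_list:
  assumes "E\<^sup>*\<^sup>* a b" "Q a" "\<forall>x y. E x y \<longrightarrow> Q y"
  shows "\<exists>cs. cs \<noteq> [] \<and> hd cs = a \<and> last cs = b \<and> (\<forall>x\<in>set cs. Q x) \<and>
            (\<forall>i. i + 1 < length cs \<longrightarrow> E (cs ! i) (cs ! (i + 1)))"
proof -
  have "Q a \<longrightarrow> (\<exists>cs. cs \<noteq> [] \<and> hd cs = a \<and> last cs = b \<and> (\<forall>x\<in>set cs. Q x) \<and>
            (\<forall>i. i + 1 < length cs \<longrightarrow> E (cs ! i) (cs ! (i + 1))))"
    using assms(1)
  proof (induction rule: converse_rtranclp_induct)
    case base
    show ?case by (intro impI exI[of _ "[b]"]) auto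
  next
    case (step y z)
    show ?case
    proof
      assume Qy: "Q y"
      have "Q z" using step.hyps(1) assms(3) by blast
      then obtain cs where cs: "cs \<noteq> []" "hd cs = z" "last cs = b" "\<forall>x\<in>set cs. Q x"
        "\<forall>i. i + 1 < length cs \<longrightarrow> E (cs ! i) (cs ! (i + 1))" using step.IH by blast
      show "\<exists>cs. cs \<noteq> [] \<and> hd cs = y \<and> last cs = b \<and> (\<forall>x\<in>set cs. Q x) \<and>
            (\<forall>i. i + 1 < length cs \<longrightarrow> E (cs ! i) (cs ! (i + 1)))"
      proof (intro exI[of _ "y # cs"] conjI allI impI)
        fix i assume i: "i + 1 < length (y # cs)"
        show "E ((y # cs) ! i) ((y # cs) ! (i + 1))"
        proof (cases i)
          case 0
          then show ?thesis using cs(1,2) step.hyps(1) by (simp add: hd_conv_nth)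
        next
          case (Suc j)
          then show ?thesis using cs(5) i by simp
        qed
      qed (use cs Qy in auto)
    qed
  qed
  then show ?thesis using assms(2) by blast
qed

lemma chain_exists:
  fixes \<Sigma> :: "(real^'n) set set"
  assumes cf: "complete_fan \<Sigma>"
    and s1: "\<sigma>1 \<in> cones_dim \<Sigma> (int CARD('n))" and s2: "\<sigma>2 \<in> cones_dim \<Sigma> (int CARD('n))"
  shows "\<exists>cs. is_chain \<Sigma> (\<sigma>1 \<inter> \<sigma>2) cs \<and> hd cs = \<sigma>1 \<and> last cs = \<sigma>2"
proof -
  define n where "n = int CARD('n)"
  define Mx where "Mx = cones_dim \<Sigma> n"
  define Lo where "Lo = {\<rho>\<in>\<Sigma>. aff_dim \<rho> \<le> n - 2}"
  define \<tau> where "\<tau> = \<sigma>1 \<inter> \<sigma>2"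
  have fan: "fan \<Sigma>" using cf unfolding complete_fan_def by (elim conjE)
  have finS: "finite \<Sigma>" using fan unfolding fan_def by (elim conjE)
  have faceax: "\<forall>A\<in>\<Sigma>. \<forall>B\<in>\<Sigma>. (A \<inter> B) face_of A \<and> (A \<inter> B) face_of B"
    using fan unfolding fan_def by (elim conjE) assumption
  have facecl: "\<forall>A\<in>\<Sigma>. \<forall>F. F face_of A \<and> F \<noteq> {} \<longrightarrow> F \<in> \<Sigma>"
    using fan unfolding fan_def by (elim conjE) assumption
  have cover: "\<Union>Mx = UNIV" using max_cover[OF cf] by (simp add: Mx_def n_def)
  have MxS: "Mx \<subseteq> \<Sigma>" by (auto simp: Mx_def cones_dim_def)
  have finMx: "finite Mx" using finite_subset[OF MxS finS] .
  have Mxdim: "\<And>A. A \<in> Mx \<Longrightarrow> aff_dim A = n" by (auto simp: Mx_def cones_dim_def)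
  have s1S: "\<sigma>1 \<in> Mx" using s1 by (simp add: Mx_def n_def)
  have s2S: "\<sigma>2 \<in> Mx" using s2 by (simp add: Mx_def n_def)
  have clo: "\<And>A. A \<in> \<Sigma> \<Longrightarrow> closed A" using fan_props(1)[OF fan] .
  have cvx: "\<And>A. A \<in> \<Sigma> \<Longrightarrow> convex A" using fan_props(2)[OF fan] .
  have zero: "\<And>A. A \<in> \<Sigma> \<Longrightarrow> 0 \<in> A" using fan_props(3)[OF fan] .
  have DIMn: "int DIM(real^'n) = n" by (simp add: n_def)
  have \<tau>face: "\<tau> face_of \<sigma>1" using faceax s1S s2S MxS unfolding \<tau>_def by blast
  have \<tau>0: "0 \<in> \<tau>" using zero s1S s2S MxS unfolding \<tau>_def by blast
  have \<tau>S: "\<tau> \<in> \<Sigma>" using facecl \<tau>face \<tau>0 s1S MxS by blast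
  obtain p where p: "p \<in> rel_interior \<tau>"
    using rel_interior_eq_empty[OF cvx[OF \<tau>S]] \<tau>0 by blast
  have p\<tau>: "p \<in> \<tau>" using p rel_interior_subset by blast
  have contain: "\<tau> \<subseteq> \<rho>" if "\<rho> \<in> \<Sigma>" "p \<in> \<rho>" for \<rho>
  proof (rule ccontr)
    assume "\<not> \<tau> \<subseteq> \<rho>"
    then have ne: "\<rho> \<inter> \<tau> \<noteq> \<tau>" by blast
    have "(\<rho> \<inter> \<tau>) face_of \<tau>" using faceax that(1) \<tau>S by blast
    then have "\<rho> \<inter> \<tau> \<subseteq> rel_frontier \<tau>" using face_of_subset_rel_frontier ne by blast
    then have "p \<in> rel_frontier \<tau>" using that(2) p\<tau> by blast
    then show False using p by (simp add: rel_frontier_def)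
  qed
  define Bad where "Bad = \<Union>{\<rho>\<in>\<Sigma>. p \<notin> \<rho>}"
  have "closed Bad" unfolding Bad_def using finS clo by (intro closed_Union) auto
  then have "open (- Bad)" by (simp add: open_Compl)
  moreover have "p \<in> - Bad" unfolding Bad_def by blast
  ultimately obtain \<delta> where \<delta>: "\<delta> > 0" "ball p \<delta> \<subseteq> - Bad"
    using open_contains_ball by blast
  have near: "\<tau> \<subseteq> \<rho>" if "\<rho> \<in> \<Sigma>" "q \<in> \<rho>" "q \<in> ball p \<delta>" for \<rho> q
  proof -
    have "p \<in> \<rho>"
    proof (rule ccontr)
      assume "p \<notin> \<rho>"
      then have "q \<in> Bad" unfolding Bad_def using that by blast
      then show False using \<delta>(2) that(3) by blast
    qed
    then show ?thesis using contain that(1) by blast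
  qed
  have int_avoid: "\<sigma> \<subseteq> \<rho>" if "\<sigma> \<in> \<Sigma>" "\<rho> \<in> \<Sigma>" "x \<in> interior \<sigma>" "x \<in> \<rho>" for \<sigma> \<rho> x
  proof (rule ccontr)
    assume "\<not> \<sigma> \<subseteq> \<rho>"
    then have ne: "\<rho> \<inter> \<sigma> \<noteq> \<sigma>" by blast
    have "(\<rho> \<inter> \<sigma>) face_of \<sigma>" using faceax that(1,2) by blast
    then have "\<rho> \<inter> \<sigma> \<subseteq> rel_frontier \<sigma>" using face_of_subset_rel_frontier ne by blast
    moreover have "x \<in> \<rho> \<inter> \<sigma>" using that(3,4) interior_subset by blast
    moreover have "x \<in> rel_interior \<sigma>" using that(3) interior_subset_rel_interior by blast
    ultimately show False by (auto simp: rel_frontier_def)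
  qed
  have near_int: "\<exists>x. x \<in> interior \<sigma> \<and> x \<in> ball p \<delta>" if "\<sigma> \<in> Mx" "p \<in> \<sigma>" for \<sigma>
  proof -
    have sS: "\<sigma> \<in> \<Sigma>" using that MxS by blast
    have "affine hull \<sigma> = UNIV" using Mxdim[OF that(1)] aff_dim_eq_full[of \<sigma>] DIMn by simp
    then have "rel_interior \<sigma> = interior \<sigma>" by (rule rel_interior_interior)
    moreover have "rel_interior \<sigma> \<noteq> {}" using rel_interior_eq_empty[OF cvx[OF sS]] zero[OF sS] by blast
    ultimately obtain c where c: "c \<in> interior \<sigma>" by blast
    define N where "N = norm (p - c)"
    define e where "e = min 1 (\<delta> / (2 * (N + 1)))"
    have N0: "N \<ge> 0" unfolding N_def by simp
    have e0: "e > 0" unfolding e_def using \<delta>(1) N0 by simp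
    have e1: "e \<le> 1" unfolding e_def by simp
    have "p - e *\<^sub>R (p - c) \<in> interior \<sigma>"
      by (rule mem_interior_convex_shrink[OF cvx[OF sS] c that(2) e0 e1])
    moreover have "dist p (p - e *\<^sub>R (p - c)) < \<delta>"
    proof -
      have "dist p (p - e *\<^sub>R (p - c)) = e * N" using e0 by (simp add: dist_norm N_def)
      also have "\<dots> \<le> (\<delta> / (2 * (N + 1))) * N" unfolding e_def using N0 by (intro mult_right_mono) auto
      also have "\<dots> < \<delta>"
      proof -
        have "N * \<delta> \<ge> 0" using N0 \<delta>(1) by simp
        then have "0 < N * \<delta> + \<delta> * 2" using \<delta>(1) by linarith
        then show ?thesis using \<delta>(1) N0 by (simp add: field_simps)
      qed
      finally show ?thesis .
    qed
    ultimately show ?thesis by auto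
  qed
  have p1: "p \<in> \<sigma>1" "p \<in> \<sigma>2" using p\<tau> unfolding \<tau>_def by auto
  obtain x' where x': "x' \<in> interior \<sigma>1" "x' \<in> ball p \<delta>" using near_int[OF s1S p1(1)] by blast
  define W where "W = interior \<sigma>2 \<inter> ball p \<delta>"
  have Wne: "W \<noteq> {}" using near_int[OF s2S p1(2)] unfolding W_def by blast
  have Wopen: "open W" unfolding W_def by (intro open_Int open_interior open_ball)
  define C where "C = (\<lambda>\<rho>. affine hull (insert x' \<rho>)) ` Lo"
  have finC: "finite C" unfolding C_def Lo_def using finS by simp
  have Cprop: "\<forall>D\<in>C. closed D \<and> interior D = {}"
  proof
    fix D assume "D \<in> C"
    then obtain \<rho> where \<rho>: "\<rho> \<in> Lo" "D = affine hull (insert x' \<rho>)" unfolding C_def by blast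
    have "aff_dim D = aff_dim (insert x' \<rho>)" using \<rho>(2) by simp
    also have "\<dots> \<le> aff_dim \<rho> + 1" by (simp add: aff_dim_insert)
    also have "\<dots> < n" using \<rho>(1) unfolding Lo_def by simp
    finally have "interior D = {}" by (intro lowdim_interior) (simp add: n_def)
    then show "closed D \<and> interior D = {}" using \<rho>(2) by simp
  qed
  have "interior ({} \<union> \<Union>C) = interior {}"
    by (rule interior_Un_closed_empty[OF finC Cprop]) simp
  then have intC: "interior (\<Union>C) = {}" by simp
  have "\<not> W \<subseteq> \<Union>C"
  proof
    assume "W \<subseteq> \<Union>C"
    then have "W \<subseteq> interior (\<Union>C)" using interior_maximal Wopen by blast
    then show False using intC Wne by blast
  qed
  then obtain y where y: "y \<in> interior \<sigma>2" "y \<in> ball p \<delta>" "y \<notin> \<Union>C" unfolding W_def by blast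
  define S where "S = closed_segment x' y"
  have Sball: "S \<subseteq> ball p \<delta>" unfolding S_def using x'(2) y(2) by (intro closed_segment_subset) auto
  have xS: "x' \<in> S" "y \<in> S" unfolding S_def by auto
  have x1: "x' \<in> \<sigma>1" using x'(1) interior_subset by blast
  have y2: "y \<in> \<sigma>2" using y(1) interior_subset by blast
  have avoid: "S \<inter> \<rho> = {}" if "\<rho> \<in> Lo" for \<rho>
  proof (rule ccontr)
    assume "S \<inter> \<rho> \<noteq> {}"
    then obtain w where w: "w \<in> S" "w \<in> \<rho>" by blast
    then obtain u where u: "0 \<le> u" "u \<le> 1" "w = (1 - u) *\<^sub>R x' + u *\<^sub>R y"
      unfolding S_def in_segment by blast
    have \<rho>S: "\<rho> \<in> \<Sigma>" and \<rho>d: "aff_dim \<rho> \<le> n - 2" using that unfolding Lo_def by auto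
    show False
    proof (cases "u = 0")
      case True
      then have "x' \<in> \<rho>" using u(3) w(2) by simp
      then have "\<sigma>1 \<subseteq> \<rho>" using int_avoid[of \<sigma>1 \<rho> x'] s1S MxS \<rho>S x'(1) by blast
      then have "aff_dim \<sigma>1 \<le> aff_dim \<rho>" by (rule aff_dim_subset)
      then show False using Mxdim[OF s1S] \<rho>d by simp
    next
      case False
      then have u0: "u > 0" using u(1) by simp
      have "(1/u) *\<^sub>R w = ((1 - u) / u) *\<^sub>R x' + y" using u0 by (simp add: u(3) scaleR_add_right)
      then have "(1 - 1/u) *\<^sub>R x' + (1/u) *\<^sub>R w = ((1 - 1/u) + (1 - u) / u) *\<^sub>R x' + y"
        by (simp add: scaleR_add_left)
      also have "(1 - 1/u) + (1 - u) / u = 0" using u0 by (simp add: field_simps)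
      finally have yeq: "y = (1 - 1/u) *\<^sub>R x' + (1/u) *\<^sub>R w" by simp
      have "y \<in> affine hull (insert x' \<rho>)" unfolding yeq
        by (rule mem_affine[OF affine_affine_hull]) (auto intro: hull_inc simp: w(2))
      then have "y \<in> \<Union>C" unfolding C_def using that by blast
      then show False using y(3) by blast
    qed
  qed
  define E where "E = (\<lambda>A B. A \<in> Mx \<and> B \<in> Mx \<and> A \<noteq> B \<and> A \<inter> B \<inter> S \<noteq> {})"
  have Eadj: "adjacent \<Sigma> A B" if "E A B" for A B
  proof -
    have A: "A \<in> Mx" and B: "B \<in> Mx" and AB: "A \<noteq> B" and q: "A \<inter> B \<inter> S \<noteq> {}"
      using that unfolding E_def by auto
    have AS: "A \<in> \<Sigma>" and BS: "B \<in> \<Sigma>" using A B MxS by auto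
    have fA: "(A \<inter> B) face_of A" and fB: "(A \<inter> B) face_of B" using faceax AS BS by auto
    have IS: "A \<inter> B \<in> \<Sigma>" using facecl AS fA q by blast
    have lo: "aff_dim (A \<inter> B) > n - 2"
    proof (rule ccontr)
      assume "\<not> aff_dim (A \<inter> B) > n - 2"
      then have "A \<inter> B \<in> Lo" unfolding Lo_def using IS by simp
      then show False using avoid q by blast
    qed
    have hi: "aff_dim (A \<inter> B) < n"
    proof (cases "A \<inter> B = A")
      case True
      then have "A face_of B" using fB by simp
      then have "aff_dim A < aff_dim B" using face_of_aff_dim_lt[OF cvx[OF BS]] AB by blast
      then show ?thesis using Mxdim[OF A] Mxdim[OF B] by simp
    next
      case False
      then have "aff_dim (A \<inter> B) < aff_dim A" using face_of_aff_dim_lt[OF cvx[OF AS] fA] by blast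
      then show ?thesis using Mxdim[OF A] by simp
    qed
    have "aff_dim (A \<inter> B) = n - 1" using lo hi by simp
    then show ?thesis unfolding adjacent_def using A B by (simp add: Mx_def n_def)
  qed
  have reach: "E\<^sup>*\<^sup>* \<sigma>1 \<sigma>2"
  proof (rule ccontr)
    assume nr: "\<not> E\<^sup>*\<^sup>* \<sigma>1 \<sigma>2"
    define R where "R = {B. E\<^sup>*\<^sup>* \<sigma>1 B}"
    define A1 where "A1 = \<Union>(Mx \<inter> R)"
    define A2 where "A2 = \<Union>(Mx - R)"
    have c1: "closed A1" unfolding A1_def using finMx clo MxS by (intro closed_Union) auto
    have c2: "closed A2" unfolding A2_def using finMx clo MxS by (intro closed_Union) auto
    have cov: "S \<subseteq> A1 \<union> A2" using cover unfolding A1_def A2_def by blast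
    have disj: "A1 \<inter> A2 \<inter> S = {}"
    proof (rule ccontr)
      assume "A1 \<inter> A2 \<inter> S \<noteq> {}"
      then obtain q X Y where q: "q \<in> X" "X \<in> Mx" "X \<in> R" "q \<in> Y" "Y \<in> Mx" "Y \<notin> R" "q \<in> S"
        unfolding A1_def A2_def by blast
      have "X \<noteq> Y" using q by blast
      then have "E X Y" unfolding E_def using q by blast
      then have "Y \<in> R" using q(3) unfolding R_def by (simp add: rtranclp.rtrancl_into_rtrancl)
      then show False using q(6) by blast
    qed
    have ne1: "A1 \<inter> S \<noteq> {}" using x1 xS s1S unfolding A1_def R_def by blast
    have ne2: "A2 \<inter> S \<noteq> {}" using y2 xS s2S nr unfolding A2_def R_def by blast
    have "connected S" unfolding S_def by simp
    then show False unfolding connected_closed using c1 c2 cov disj ne1 ne2 by blast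
  qed
  obtain cs where cs: "cs \<noteq> []" "hd cs = \<sigma>1" "last cs = \<sigma>2"
    "\<forall>X\<in>set cs. X \<in> Mx \<and> X \<inter> S \<noteq> {}"
    "\<forall>i. i + 1 < length cs \<longrightarrow> E (cs ! i) (cs ! (i + 1))"
    using rtranclp_list[of E \<sigma>1 \<sigma>2 "\<lambda>X. X \<in> Mx \<and> X \<inter> S \<noteq> {}"] reach s1S x1 xS
    unfolding E_def by blast
  have "is_chain \<Sigma> \<tau> cs"
    unfolding is_chain_def
  proof (intro conjI ballI allI impI)
    show "cs \<noteq> []" by (rule cs(1))
  next
    fix X assume X: "X \<in> set cs"
    then show "X \<in> cones_dim \<Sigma> (int CARD('n))" using cs(4) by (simp add: Mx_def n_def)
    obtain q where "q \<in> X" "q \<in> S" using cs(4) X by blast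
    then show "\<tau> \<subseteq> X" using near[of X q] cs(4) X MxS Sball by blast
  next
    fix i assume "i + 1 < length cs"
    then show "adjacent \<Sigma> (cs ! i) (cs ! (i + 1))" using cs(5) Eadj by blast
  qed
  then show ?thesis using cs(2,3) unfolding \<tau>_def by blast
qed



definition cj2 :: "('r::finite \<Rightarrow> complex) \<Rightarrow> ('r \<Rightarrow> complex) \<Rightarrow> complex^'r^'r \<Rightarrow> complex^'r^'r" where
  "cj2 a b X = dg (\<lambda>i. inverse (a i)) ** X ** dg b"

lemma cj2_nth: "cj2 a b X $ i $ j = inverse (a i) * X $ i $ j * b j"
  by (simp add: cj2_def dg_mult_right dg_mult_left)

lemma cj2_mult: "(\<forall>i. b i \<noteq> 0) \<Longrightarrow> cj2 a b X ** cj2 b c Y = cj2 a c (X ** Y)"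
proof -
  assume b: "\<forall>i. b i \<noteq> 0"
  have "cj2 a b X ** cj2 b c Y = dg (\<lambda>i. inverse (a i)) ** X ** (dg b ** dg (\<lambda>i. inverse (b i))) ** Y ** dg c"
    by (simp add: cj2_def matrix_mul_assoc)
  also have "\<dots> = cj2 a c (X ** Y)" using dg_inv1[OF b] by (simp add: cj2_def matrix_mul_assoc)
  finally show ?thesis .
qed

lemma cj2_one: "(\<forall>i. a i \<noteq> 0) \<Longrightarrow> cj2 a a (mat 1) = mat 1"
  by (simp add: cj2_def dg_inv2)

lemma cj_cj2: "cj a X = cj2 a a X"
  by (simp add: cj_def cj2_def)

lemma cj2_cancel: "(\<forall>i. a i \<noteq> 0) \<Longrightarrow> dg a ** cj2 a b X = X ** dg b"
proof -
  assume a: "\<forall>i. a i \<noteq> 0"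
  have "dg a ** cj2 a b X = (dg a ** dg (\<lambda>i. inverse (a i))) ** X ** dg b"
    by (simp add: cj2_def matrix_mul_assoc)
  then show ?thesis using dg_inv1[OF a] by simp
qed

lemma chainG_tele:
  assumes d: "\<forall>\<sigma> i. d \<sigma> i \<noteq> 0"
    and G: "\<And>a b. P a b \<Longrightarrow> G' a b t = cj2 (d a) (d b) (G a b t)"
  shows "cs \<noteq> [] \<Longrightarrow> (\<forall>i. i + 1 < length cs \<longrightarrow> P (cs ! i) (cs ! (i + 1))) \<Longrightarrow>
    chainG G' cs t = cj2 (d (hd cs)) (d (last cs)) (chainG G cs t)"
proof (induction cs)
  case Nil then show ?case by simp
next
  case (Cons a cs)
  show ?case
  proof (cases cs)
    case Nil
    then show ?thesis using d by (simp add: cj2_one)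
  next
    case (Cons b cs')
    have Pab: "P a b" using Cons.prems(2)[rule_format, of 0] Cons by simp
    have Pcs: "\<forall>i. i + 1 < length cs \<longrightarrow> P (cs ! i) (cs ! (i + 1))"
    proof (intro allI impI)
      fix i assume "i + 1 < length cs"
      then show "P (cs ! i) (cs ! (i + 1))" using Cons.prems(2)[rule_format, of "Suc i"] by simp
    qed
    have IH: "chainG G' cs t = cj2 (d (hd cs)) (d (last cs)) (chainG G cs t)"
      using Cons.IH Pcs Cons by simp
    have "chainG G' (a # cs) t = G' a b t ** chainG G' cs t" using Cons by simp
    also have "\<dots> = cj2 (d a) (d b) (G a b t) ** cj2 (d b) (d (last cs)) (chainG G cs t)"
      using G[OF Pab] IH Cons by simp
    also have "\<dots> = cj2 (d a) (d (last cs)) (G a b t ** chainG G cs t)"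
      using d by (simp add: cj2_mult)
    also have "\<dots> = cj2 (d (hd (a # cs))) (d (last (a # cs))) (chainG G (a # cs) t)"
      using Cons by simp
    finally show ?thesis .
  qed
qed

lemma foldr_cj:
  assumes "\<forall>i. a i \<noteq> 0"
  shows "cj a (foldr (\<lambda>\<omega> X. matexp (N \<omega>) ** X) ws (mat 1)) =
         foldr (\<lambda>\<omega> X. matexp (cj a (N \<omega>)) ** X) ws (mat 1)"
proof (induction ws)
  case Nil then show ?case using assms by (simp add: cj_one)
next
  case (Cons w ws)
  then show ?case using assms by (simp add: cj_mult matexp_cj)
qed

lemma Nmat_cj:
  "cj a (Nmat L \<sigma> \<tau> \<omega> c t) = Nmat L \<sigma> \<tau> \<omega> (\<lambda>\<alpha> \<beta>. inverse (a \<alpha>) * c \<alpha> \<beta> * a \<beta>) t"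
  unfolding vec_eq_iff by (simp add: cj_nth Nmat_def)

lemma wall_aut_cj:
  fixes L :: "('p, 'n::finite, 'r::finite) tlms" and F :: "complex^'n \<Rightarrow> complex^'r^'r"
  assumes "\<forall>i. a i \<noteq> 0" "wall_aut L \<sigma>1 \<sigma>2 F"
  shows "wall_aut L \<sigma>1 \<sigma>2 (\<lambda>t. cj a (F t))"
proof -
  obtain ws c where ws: "distinct ws" "set ws = Sset L \<sigma>1 (\<sigma>1 \<inter> \<sigma>2)"
    "\<forall>t\<in>torus. F t = foldr (\<lambda>\<omega> X. matexp (Nmat L \<sigma>1 (\<sigma>1 \<inter> \<sigma>2) \<omega> (c \<omega>) t) ** X) ws (mat 1)"
    using assms(2) unfolding wall_aut_def by blast
  define c' where "c' = (\<lambda>\<omega> \<alpha> \<beta>. inverse (a \<alpha>) * c \<omega> \<alpha> \<beta> * a \<beta>)"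
  have "\<forall>t\<in>torus. cj a (F t) = foldr (\<lambda>\<omega> X. matexp (Nmat L \<sigma>1 (\<sigma>1 \<inter> \<sigma>2) \<omega> (c' \<omega>) t) ** X) ws (mat 1)"
  proof
    fix t :: "complex^'n" assume "t \<in> torus"
    then have "cj a (F t) = cj a (foldr (\<lambda>\<omega> X. matexp (Nmat L \<sigma>1 (\<sigma>1 \<inter> \<sigma>2) \<omega> (c \<omega>) t) ** X) ws (mat 1))"
      using ws(3) by simp
    also have "\<dots> = foldr (\<lambda>\<omega> X. matexp (cj a (Nmat L \<sigma>1 (\<sigma>1 \<inter> \<sigma>2) \<omega> (c \<omega>) t)) ** X) ws (mat 1)"
      by (rule foldr_cj[OF assms(1)])
    also have "\<dots> = foldr (\<lambda>\<omega> X. matexp (Nmat L \<sigma>1 (\<sigma>1 \<inter> \<sigma>2) \<omega> (c' \<omega>) t) ** X) ws (mat 1)"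
      by (simp add: Nmat_cj c'_def)
    finally show "cj a (F t) = foldr (\<lambda>\<omega> X. matexp (Nmat L \<sigma>1 (\<sigma>1 \<inter> \<sigma>2) \<omega> (c' \<omega>) t) ** X) ws (mat 1)" .
  qed
  then show ?thesis unfolding wall_aut_def using ws(1,2) by blast
qed

lemma regular_const: "regular_on (\<sigma> :: (real^'n::finite) set) (\<lambda>t. k)"
proof -
  have "(0::int^'n) \<in> dualM \<sigma>" by (simp add: dualM_def pairing_def)
  moreover have "\<forall>t\<in>torus. k = (\<Sum>m\<in>{0::int^'n}. (\<lambda>_. k) m * zmon m t)"
    by (simp add: zmon_def)
  ultimately show ?thesis unfolding regular_on_def
    by (intro exI[of _ "{0::int^'n}"] exI[of _ "\<lambda>_. k"]) simp
qed

lemma adjacent_sym: "adjacent \<Sigma> a b \<Longrightarrow> adjacent \<Sigma> b a"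
  unfolding adjacent_def by (simp add: Int_commute)

theorem proposition4p19:
  fixes \<Sigma> :: "(real^'n::finite) set set"
    and L :: "('p, 'n, 'r::finite) tlms"
    and g g' :: "'p set \<Rightarrow> 'p set \<Rightarrow> complex"
    and Th :: "(real^'n) set \<Rightarrow> (real^'n) set \<Rightarrow> complex^'n \<Rightarrow> complex^'r^'r"
  assumes "tropical_lagrangian_multisection \<Sigma> L"
    and "unique_adjacent_lifts \<Sigma> L"
    and "loc_sys \<Sigma> L g"
    and "consistent \<Sigma> L g Th"
    and "loc_sys \<Sigma> L g'"
    and "iso_loc_sys \<Sigma> L g g'"
  shows "\<exists>Th'. consistent \<Sigma> L g' Th' \<and> toric_bundle_iso \<Sigma> L g Th g' Th'"
proof -
  note tlm = assms(1)[unfolded tropical_lagrangian_multisection_def]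
  have cf: "complete_fan \<Sigma>" using tlm by (elim conjE)
  have liftmax: "\<forall>\<sigma>\<in>cones_dim \<Sigma> (int CARD('n)). \<forall>\<alpha>.
         lift L \<sigma> \<alpha> \<in> maxcones L \<and> proj L ` lift L \<sigma> \<alpha> = \<sigma>"
    using tlm by (elim conjE) assumption
  obtain h where h: "\<forall>A\<in>maxcones L. h A \<noteq> 0"
    "\<forall>A B. adjL \<Sigma> L A B \<longrightarrow> g' A B = h B * g A B / h A"
    using assms(6) unfolding iso_loc_sys_def by blast
  define d :: "(real^'n) set \<Rightarrow> 'r \<Rightarrow> complex" where
    "d = (\<lambda>\<sigma> \<alpha>. if h (lift L \<sigma> \<alpha>) = 0 then 1 else h (lift L \<sigma> \<alpha>))"
  have d0: "\<forall>\<sigma> i. d \<sigma> i \<noteq> 0" unfolding d_def by simp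
  have dh: "d \<sigma> \<alpha> = h (lift L \<sigma> \<alpha>)" if "\<sigma> \<in> cones_dim \<Sigma> (int CARD('n))" for \<sigma> \<alpha>
    using liftmax that h(1) unfolding d_def by auto
  have hnz: "h (lift L \<sigma> \<alpha>) \<noteq> 0" if "\<sigma> \<in> cones_dim \<Sigma> (int CARD('n))" for \<sigma> \<alpha>
    using liftmax that h(1) by auto
  have cons: "wall_collection \<Sigma> L g Th"
    "\<forall>\<omega>\<in>\<Sigma>. \<forall>cs. is_chain \<Sigma> \<omega> cs \<and> hd cs = last cs \<longrightarrow> (\<forall>t\<in>torus. chainG (Gmat L g Th) cs t = mat 1)"
    using assms(4) unfolding consistent_def by auto
  define Th' where "Th' = (\<lambda>\<sigma>1 \<sigma>2 t. cj (d \<sigma>1) (Th \<sigma>1 \<sigma>2 t))"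
  have Gsf': "Gsf L g' \<sigma>1 \<sigma>2 t = cj2 (d \<sigma>1) (d \<sigma>2) (Gsf L g \<sigma>1 \<sigma>2 t)"
    if adj: "adjacent \<Sigma> \<sigma>1 \<sigma>2" for \<sigma>1 \<sigma>2 t
  proof -
    have c1: "\<sigma>1 \<in> cones_dim \<Sigma> (int CARD('n))" and c2: "\<sigma>2 \<in> cones_dim \<Sigma> (int CARD('n))"
      using adj unfolding adjacent_def by auto
    have aL: "adjL \<Sigma> L (lift L \<sigma>1 \<alpha>) (lift L \<sigma>2 (adjl L \<sigma>1 \<sigma>2 \<alpha>))" for \<alpha>
      using assms(2) adj unfolding unique_adjacent_lifts_def by blast
    show ?thesis
      unfolding vec_eq_iff
    proof (intro allI)
      fix \<alpha> \<beta>
      show "Gsf L g' \<sigma>1 \<sigma>2 t $ \<alpha> $ \<beta> = cj2 (d \<sigma>1) (d \<sigma>2) (Gsf L g \<sigma>1 \<sigma>2 t) $ \<alpha> $ \<beta>"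
      proof (cases "\<beta> = adjl L \<sigma>1 \<sigma>2 \<alpha>")
        case True
        have "g' (lift L \<sigma>1 \<alpha>) (lift L \<sigma>2 \<beta>) = h (lift L \<sigma>2 \<beta>) * g (lift L \<sigma>1 \<alpha>) (lift L \<sigma>2 \<beta>) / h (lift L \<sigma>1 \<alpha>)"
          using h(2) aL[of \<alpha>] True by blast
        then show ?thesis using True by (simp add: cj2_nth Gsf_def dh[OF c1] dh[OF c2] field_simps hnz[OF c1])
      next
        case False
        then show ?thesis by (simp add: cj2_nth Gsf_def)
      qed
    qed
  qed
  have Gm': "Gmat L g' Th' \<sigma>1 \<sigma>2 t = cj2 (d \<sigma>1) (d \<sigma>2) (Gmat L g Th \<sigma>1 \<sigma>2 t)"
    if adj: "adjacent \<Sigma> \<sigma>1 \<sigma>2" for \<sigma>1 \<sigma>2 t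
  proof -
    have "Gmat L g' Th' \<sigma>1 \<sigma>2 t = cj2 (d \<sigma>1) (d \<sigma>1) (Th \<sigma>1 \<sigma>2 t) ** cj2 (d \<sigma>1) (d \<sigma>2) (Gsf L g \<sigma>1 \<sigma>2 t)"
      by (simp add: Gmat_def Th'_def cj_cj2 Gsf'[OF adj])
    also have "\<dots> = cj2 (d \<sigma>1) (d \<sigma>2) (Gmat L g Th \<sigma>1 \<sigma>2 t)"
      using d0 by (simp add: cj2_mult Gmat_def)
    finally show ?thesis .
  qed
  have tele: "chainG (Gmat L g' Th') cs t = cj2 (d (hd cs)) (d (last cs)) (chainG (Gmat L g Th) cs t)"
    if "is_chain \<Sigma> \<omega> cs" for \<omega> cs t
  proof -
    have "cs \<noteq> []" "\<forall>i. i + 1 < length cs \<longrightarrow> adjacent \<Sigma> (cs ! i) (cs ! (i + 1))"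
      using that unfolding is_chain_def by auto
    then show ?thesis using chainG_tele[of d "adjacent \<Sigma>" "Gmat L g' Th'" t "Gmat L g Th" cs] d0 Gm'
      by blast
  qed
  have wc: "wall_collection \<Sigma> L g' Th'"
    unfolding wall_collection_def
  proof (intro allI impI conjI ballI)
    fix \<sigma>1 \<sigma>2 assume adj: "adjacent \<Sigma> \<sigma>1 \<sigma>2"
    have "wall_aut L \<sigma>1 \<sigma>2 (Th \<sigma>1 \<sigma>2) \<or> wall_aut L \<sigma>2 \<sigma>1 (Th \<sigma>2 \<sigma>1)"
      using cons(1) adj unfolding wall_collection_def by blast
    then show "wall_aut L \<sigma>1 \<sigma>2 (Th' \<sigma>1 \<sigma>2) \<or> wall_aut L \<sigma>2 \<sigma>1 (Th' \<sigma>2 \<sigma>1)"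
      unfolding Th'_def using wall_aut_cj d0 by blast
    fix t :: "complex^'n" assume t: "t \<in> torus"
    have "Gmat L g Th \<sigma>1 \<sigma>2 t ** Gmat L g Th \<sigma>2 \<sigma>1 t = mat 1"
      using cons(1) adj t unfolding wall_collection_def by blast
    then show "Gmat L g' Th' \<sigma>1 \<sigma>2 t ** Gmat L g' Th' \<sigma>2 \<sigma>1 t = mat 1"
      using Gm'[OF adj] Gm'[OF adjacent_sym[OF adj]] d0 by (simp add: cj2_mult cj2_one)
  qed
  have consistent': "consistent \<Sigma> L g' Th'"
    unfolding consistent_def
  proof (intro conjI wc ballI allI impI)
    fix \<omega> cs and t :: "complex^'n" assume \<omega>: "\<omega> \<in> \<Sigma>" and ch: "is_chain \<Sigma> \<omega> cs \<and> hd cs = last cs" and t: "t \<in> torus"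
    have "chainG (Gmat L g Th) cs t = mat 1" using cons(2) \<omega> ch t by blast
    then show "chainG (Gmat L g' Th') cs t = mat 1"
      using tele[of \<omega> cs t] ch d0 by (simp add: cj2_one)
  qed
  have iso: "toric_bundle_iso \<Sigma> L g Th g' Th'"
    unfolding toric_bundle_iso_def
  proof (rule exI[of _ "\<lambda>\<sigma> t. dg (d \<sigma>)"], rule exI[of _ "\<lambda>\<sigma> t. dg (\<lambda>i. inverse (d \<sigma> i))"], intro ballI conjI allI)
    fix \<sigma> \<alpha> \<beta>
    show "regular_on \<sigma> (\<lambda>t. dg (d \<sigma>) $ \<alpha> $ \<beta>)" by (rule regular_const)
    show "regular_on \<sigma> (\<lambda>t. dg (\<lambda>i. inverse (d \<sigma> i)) $ \<alpha> $ \<beta>)" by (rule regular_const)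
  next
    fix \<sigma> t
    show "dg (d \<sigma>) ** dg (\<lambda>i. inverse (d \<sigma> i)) = mat 1" using d0 by (simp add: dg_inv1)
    show "dg (\<lambda>i. inverse (d \<sigma> i)) ** dg (d \<sigma>) = mat 1" using d0 by (simp add: dg_inv2)
  next
    fix \<sigma> s t \<alpha> \<beta>
    show "dg (d \<sigma>) $ \<alpha> $ \<beta> =
          zmon (slope L (lift L \<sigma> \<alpha>) - slope L (lift L \<sigma> \<beta>)) s * dg (d \<sigma>) $ \<alpha> $ \<beta>"
      by (simp add: dg_def zmon_def)
  next
    fix \<sigma> \<sigma>2 t
    assume s: "\<sigma> \<in> cones_dim \<Sigma> (int CARD('n))" and s2: "\<sigma>2 \<in> cones_dim \<Sigma> (int CARD('n))"
    define cs where "cs = (SOME cs. is_chain \<Sigma> (\<sigma> \<inter> \<sigma>2) cs \<and> hd cs = \<sigma> \<and> last cs = \<sigma>2)"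
    have cs: "is_chain \<Sigma> (\<sigma> \<inter> \<sigma>2) cs \<and> hd cs = \<sigma> \<and> last cs = \<sigma>2"
      unfolding cs_def by (rule someI_ex[OF chain_exists[OF cf s s2]])
    have "Gfull \<Sigma> L g' Th' \<sigma> \<sigma>2 t = cj2 (d \<sigma>) (d \<sigma>2) (Gfull \<Sigma> L g Th \<sigma> \<sigma>2 t)"
      unfolding Gfull_def cs_def[symmetric] using tele[of "\<sigma> \<inter> \<sigma>2" cs t] cs by simp
    then show "Gfull \<Sigma> L g Th \<sigma> \<sigma>2 t ** dg (d \<sigma>2) = dg (d \<sigma>) ** Gfull \<Sigma> L g' Th' \<sigma> \<sigma>2 t"
      using d0 by (simp add: cj2_cancel)
  qed
  show ?thesis using consistent' iso by blast
qed

end
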